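(* For every instance of preemptive $s$-GPSP there is an optimal solution in which, for each scheduled job $j$, both its start time (the first time $j$ is processed) and its completion time belong to the set $T:=\{r_{j'}+\sum_{i=1}^{\overline p}s_iq_i : j'\in J,\ s_1,\dots,s_{\overline p}\in\{0,\dots,s\}\}$.
   Context: $s$-bounded General Profit Scheduling Problem ($s$-GPSP): given a set $J$ of $n$ jobs, each with release date $r_j$, processing time $p_j$, and a non-increasing profit function $f_j$ of the completion time, select a set $\bar J\subseteq J$ of at most $s$ jobs and schedule them on a single machine, possibly with preemption (jobs may be interrupted and resumed; no job is processed before its release date), so as to maximize $\sum_{j\in\bar J}f_j(C_j)$, $C_j$ being the completion time. $q_1,\dots,q_{\overline p}$ are the distinct processing times in the instance. *)

theory Defs
  imports Complex_Main
begin

text \<open>A preemptive schedule assigns to every job a finite list of processing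
  pieces (a, b), meaning the job is processed on the time interval [a, b].\<close>
type_synonym 'j sched = "'j \<Rightarrow> (real \<times> real) list"

definition piece_len :: "real \<times> real \<Rightarrow> real" where
  "piece_len ab = snd ab - fst ab"

definition feasible ::
  "'j set \<Rightarrow> ('j \<Rightarrow> real) \<Rightarrow> ('j \<Rightarrow> real) \<Rightarrow> nat \<Rightarrow> 'j set \<Rightarrow> 'j sched \<Rightarrow> bool" where
  "feasible J r p s S \<sigma> \<longleftrightarrow>
     S \<subseteq> J \<and> card S \<le> s \<and>
     (\<forall>j\<in>S. \<sigma> j \<noteq> [] \<and>
        (\<forall>ab\<in>set (\<sigma> j). r j \<le> fst ab \<and> fst ab < snd ab) \<and>
        sum_list (map piece_len (\<sigma> j)) = p j) \<and>
     (\<forall>j\<in>S. \<forall>k\<in>S. \<forall>u<length (\<sigma> j). \<forall>v<length (\<sigma> k).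
        (j, u) \<noteq> (k, v) \<longrightarrow>
          snd (\<sigma> j ! u) \<le> fst (\<sigma> k ! v) \<or> snd (\<sigma> k ! v) \<le> fst (\<sigma> j ! u))"

definition start_time :: "'j sched \<Rightarrow> 'j \<Rightarrow> real" where
  "start_time \<sigma> j = Min (fst ` set (\<sigma> j))"

definition completion_time :: "'j sched \<Rightarrow> 'j \<Rightarrow> real" where
  "completion_time \<sigma> j = Max (snd ` set (\<sigma> j))"

definition profit :: "('j \<Rightarrow> real \<Rightarrow> real) \<Rightarrow> 'j set \<Rightarrow> 'j sched \<Rightarrow> real" where
  "profit f S \<sigma> = (\<Sum>j\<in>S. f j (completion_time \<sigma> j))"

text \<open>The candidate time set T: r_j' plus a combination of the distinct
  processing times q (the elements of p ` J) with multiplicities in {0..s}.\<close>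
definition time_set :: "'j set \<Rightarrow> ('j \<Rightarrow> real) \<Rightarrow> ('j \<Rightarrow> real) \<Rightarrow> nat \<Rightarrow> real set" where
  "time_set J r p s = {r j' + (\<Sum>q\<in>p ` J. real (c q) * q) | j' c.
      j' \<in> J \<and> (\<forall>q\<in>p ` J. c q \<le> s)}"

end

theory Submission
  imports Defs "HOL-Library.FuncSet"
begin


lemma ex_max_on:
  fixes h :: "'a \<Rightarrow> 'b::linorder"
  assumes "finite I" "I \<noteq> {}"
  shows "\<exists>i0\<in>I. \<forall>i\<in>I. h i \<le> h i0"
proof -
  have "Max (h ` I) \<in> h ` I" using assms by simp
  then obtain i0 where "i0 \<in> I" "h i0 = Max (h ` I)" by auto
  then show ?thesis using assms by (metis Max_ge finite_imageI imageI)
qed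

lemma ex_min_on:
  fixes h :: "'a \<Rightarrow> 'b::linorder"
  assumes "finite I" "I \<noteq> {}"
  shows "\<exists>i0\<in>I. \<forall>i\<in>I. h i0 \<le> h i"
proof -
  have "Min (h ` I) \<in> h ` I" using assms by simp
  then obtain i0 where "i0 \<in> I" "h i0 = Min (h ` I)" by auto
  then show ?thesis using assms by (metis Min_le finite_imageI imageI)
qed

lemma L1:
  fixes g :: "'a \<Rightarrow> real \<times> real"
  assumes "finite I" "x \<le> y"
    and "\<forall>i\<in>I. x \<le> fst (g i) \<and> fst (g i) < snd (g i) \<and> snd (g i) \<le> y"
    and "\<forall>i\<in>I. \<forall>k\<in>I. i \<noteq> k \<longrightarrow> snd (g i) \<le> fst (g k) \<or> snd (g k) \<le> fst (g i)"
  shows "(\<Sum>i\<in>I. snd (g i) - fst (g i)) \<le> y - x"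
  using assms
proof (induction "card I" arbitrary: I y rule: less_induct)
  case less
  show ?case
  proof (cases "I = {}")
    case True then show ?thesis using less by simp
  next
    case False
    then obtain i0 where i0: "i0 \<in> I" "\<forall>i\<in>I. fst (g i) \<le> fst (g i0)"
      using ex_max_on[OF less.prems(1) False, of "\<lambda>i. fst (g i)"] by blast
    have oth: "\<forall>i\<in>I - {i0}. snd (g i) \<le> fst (g i0)"
    proof
      fix i assume i: "i \<in> I - {i0}"
      then have "snd (g i) \<le> fst (g i0) \<or> snd (g i0) \<le> fst (g i)" using less.prems(4) i0 by blast
      moreover have "fst (g i0) < snd (g i0)" "fst (g i) \<le> fst (g i0)" using i0 less.prems(3) i by auto
      ultimately show "snd (g i) \<le> fst (g i0)" by linarith
    qed
    have "card (I - {i0}) < card I" using i0 less.prems(1) by (meson card_Diff1_less)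
    then have IH: "(\<Sum>i\<in>I - {i0}. snd (g i) - fst (g i)) \<le> fst (g i0) - x"
      using less.hyps[of "I - {i0}" "fst (g i0)"] less.prems oth i0 by auto
    have "(\<Sum>i\<in>I. snd (g i) - fst (g i)) = (snd (g i0) - fst (g i0)) + (\<Sum>i\<in>I - {i0}. snd (g i) - fst (g i))"
      using i0 less.prems(1) by (simp add: sum.remove)
    then show ?thesis using IH i0 less.prems(3) by auto
  qed
qed

lemma L2:
  fixes g :: "'a \<Rightarrow> real \<times> real"
  assumes "finite I" "x \<le> y"
    and "\<forall>i\<in>I. fst (g i) < snd (g i) \<and> snd (g i) \<le> y"
    and "\<forall>i\<in>I. \<forall>k\<in>I. i \<noteq> k \<longrightarrow> snd (g i) \<le> fst (g k) \<or> snd (g k) \<le> fst (g i)"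
    and "\<forall>z. x \<le> z \<and> z < y \<longrightarrow> (\<exists>i\<in>I. fst (g i) \<le> z \<and> z \<le> snd (g i))"
  shows "y - x \<le> (\<Sum>i\<in>I. snd (g i) - fst (g i))"
  using assms
proof (induction "card I" arbitrary: I y rule: less_induct)
  case less
  have pos: "0 \<le> (\<Sum>i\<in>I'. snd (g i) - fst (g i))" if "I' \<subseteq> I" for I'
    using less.prems(3) that by (intro sum_nonneg) (auto simp: less_imp_le)
  show ?case
  proof (cases "x = y")
    case True then show ?thesis using pos[of I] by simp
  next
    case False
    then have xy: "x < y" using less.prems(2) by simp
    then have "I \<noteq> {}" using less.prems(5) by auto
    then obtain i0 where i0: "i0 \<in> I" "\<forall>i\<in>I. fst (g i) \<le> fst (g i0)"
      using ex_max_on[OF less.prems(1), of "\<lambda>i. fst (g i)"] by blast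
    have oth: "\<forall>i\<in>I - {i0}. snd (g i) \<le> fst (g i0)"
    proof
      fix i assume i: "i \<in> I - {i0}"
      then have "snd (g i) \<le> fst (g i0) \<or> snd (g i0) \<le> fst (g i)" using less.prems(4) i0 by blast
      moreover have "fst (g i0) < snd (g i0)" "fst (g i) \<le> fst (g i0)" using i0 less.prems(3) i by auto
      ultimately show "snd (g i) \<le> fst (g i0)" by linarith
    qed
    have c0: "snd (g i0) = y"
    proof (rule ccontr)
      assume "snd (g i0) \<noteq> y"
      then have lt: "snd (g i0) < y" using i0 less.prems(3) by force
      define z where "z = (max (snd (g i0)) x + y) / 2"
      have "x \<le> z \<and> z < y" using lt xy unfolding z_def by auto
      then obtain i where i: "i \<in> I" "fst (g i) \<le> z" "z \<le> snd (g i)" using less.prems(5) by blast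
      have "z > snd (g i0)" using lt xy unfolding z_def by auto
      then have "i \<noteq> i0" using i by auto
      then have "snd (g i) \<le> fst (g i0)" using oth i by auto
      then show False using i \<open>z > snd (g i0)\<close> i0 less.prems(3) by force
    qed
    have split: "(\<Sum>i\<in>I. snd (g i) - fst (g i)) = (snd (g i0) - fst (g i0)) + (\<Sum>i\<in>I - {i0}. snd (g i) - fst (g i))"
      using i0 less.prems(1) by (simp add: sum.remove)
    show ?thesis
    proof (cases "fst (g i0) \<le> x")
      case True
      then show ?thesis using split c0 pos[of "I - {i0}"] by auto
    next
      case False
      have "card (I - {i0}) < card I" using i0 less.prems(1) by (meson card_Diff1_less)
      moreover have "\<forall>z. x \<le> z \<and> z < fst (g i0) \<longrightarrow> (\<exists>i\<in>I - {i0}. fst (g i) \<le> z \<and> z \<le> snd (g i))"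
      proof (intro allI impI)
        fix z assume z: "x \<le> z \<and> z < fst (g i0)"
        then have "z < y" using c0 i0 less.prems(3) by force
        then obtain i where i: "i \<in> I" "fst (g i) \<le> z" "z \<le> snd (g i)" using less.prems(5) z by blast
        then have "i \<noteq> i0" using z by auto
        then show "\<exists>i\<in>I - {i0}. fst (g i) \<le> z \<and> z \<le> snd (g i)" using i by blast
      qed
      ultimately have IH: "fst (g i0) - x \<le> (\<Sum>i\<in>I - {i0}. snd (g i) - fst (g i))"
        using less.hyps[of "I - {i0}" "fst (g i0)"] less.prems oth False by auto
      then show ?thesis using split c0 by auto
    qed
  qed
qed



lemma fill:
  fixes F :: "(real \<times> real) set"
  assumes "finite F" "\<forall>x\<in>F. fst x < snd x" "0 < p"
  shows "\<exists>Q. Q \<noteq> [] \<and> (\<forall>q\<in>set Q. r \<le> fst q \<and> fst q < snd q) \<and>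
     sum_list (map piece_len Q) = p \<and> sorted_wrt (\<lambda>x y. snd x \<le> fst y) Q \<and>
     (\<forall>q\<in>set Q. \<forall>x\<in>F. snd q \<le> fst x \<or> snd x \<le> fst q) \<and>
     (\<forall>z. r \<le> z \<longrightarrow> (\<exists>q\<in>set Q. z \<le> snd q) \<longrightarrow>
        (\<exists>x\<in>F. fst x \<le> z \<and> z \<le> snd x) \<or> (\<exists>q\<in>set Q. fst q \<le> z \<and> z \<le> snd q))"
  using assms
proof (induction "card F" arbitrary: F r p rule: less_induct)
  case less
  show ?case
  proof (cases "{x\<in>F. r < snd x} = {}")
    case True
    show ?thesis
      apply (rule exI[of _ "[(r, r + p)]"])
      using True less.prems by (force simp: piece_len_def)
  next
    case False
    obtain x0 where x0: "x0 \<in> F" "r < snd x0" "\<forall>x\<in>{x\<in>F. r < snd x}. fst x0 \<le> fst x"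
      using ex_min_on[OF _ False, of fst] less.prems(1) by auto
    define a0 c0 where "a0 = fst x0" and "c0 = snd x0"
    have x0eq: "x0 = (a0, c0)" unfolding a0_def c0_def by simp
    have ac: "a0 < c0" using x0 less.prems(2) unfolding a0_def c0_def by auto
    have card: "card (F - {x0}) < card F" using x0 less.prems(1) by (meson card_Diff1_less)
    have free: "\<forall>x\<in>F. snd x \<le> r \<or> a0 \<le> fst x" using x0 unfolding a0_def by force
    show ?thesis
    proof (cases "a0 \<le> r")
      case True
      obtain Q where Q: "Q \<noteq> [] \<and> (\<forall>q\<in>set Q. c0 \<le> fst q \<and> fst q < snd q) \<and>
         sum_list (map piece_len Q) = p \<and> sorted_wrt (\<lambda>x y. snd x \<le> fst y) Q \<and>
         (\<forall>q\<in>set Q. \<forall>x\<in>F - {x0}. snd q \<le> fst x \<or> snd x \<le> fst q) \<and>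
         (\<forall>z. c0 \<le> z \<longrightarrow> (\<exists>q\<in>set Q. z \<le> snd q) \<longrightarrow>
            (\<exists>x\<in>F - {x0}. fst x \<le> z \<and> z \<le> snd x) \<or> (\<exists>q\<in>set Q. fst q \<le> z \<and> z \<le> snd q))"
        using less.hyps[OF card, of p c0] less.prems by auto
      show ?thesis
      proof (rule exI[of _ Q], intro conjI)
        show "\<forall>q\<in>set Q. r \<le> fst q \<and> fst q < snd q" using Q x0 c0_def by force
        show "\<forall>q\<in>set Q. \<forall>x\<in>F. snd q \<le> fst x \<or> snd x \<le> fst q"
          using Q x0eq by (metis Diff_iff singletonD snd_conv)
        show "\<forall>z\<ge>r. (\<exists>q\<in>set Q. z \<le> snd q) \<longrightarrow>
            (\<exists>x\<in>F. fst x \<le> z \<and> z \<le> snd x) \<or> (\<exists>q\<in>set Q. fst q \<le> z \<and> z \<le> snd q)"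
        proof (intro allI impI)
          fix z assume z: "r \<le> z" "\<exists>q\<in>set Q. z \<le> snd q"
          show "(\<exists>x\<in>F. fst x \<le> z \<and> z \<le> snd x) \<or> (\<exists>q\<in>set Q. fst q \<le> z \<and> z \<le> snd q)"
          proof (cases "z \<le> c0")
            case True then show ?thesis using x0 x0eq \<open>a0 \<le> r\<close> z by (metis fst_conv order_trans snd_conv)
          next
            case False
            have "(\<exists>x\<in>F - {x0}. fst x \<le> z \<and> z \<le> snd x) \<or> (\<exists>q\<in>set Q. fst q \<le> z \<and> z \<le> snd q)"
              using Q z False by auto
            then show ?thesis by blast
          qed
        qed
      qed (use Q in auto)
    next
      case False
      then have ra: "r < a0" by simp
      show ?thesis
      proof (cases "r + p \<le> a0")
        case True
        show ?thesis
          apply (rule exI[of _ "[(r, r + p)]"])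
          using True less.prems free by (force simp: piece_len_def)
      next
        case False
        obtain Q where Q: "Q \<noteq> [] \<and> (\<forall>q\<in>set Q. c0 \<le> fst q \<and> fst q < snd q) \<and>
           sum_list (map piece_len Q) = p - (a0 - r) \<and> sorted_wrt (\<lambda>x y. snd x \<le> fst y) Q \<and>
           (\<forall>q\<in>set Q. \<forall>x\<in>F - {x0}. snd q \<le> fst x \<or> snd x \<le> fst q) \<and>
           (\<forall>z. c0 \<le> z \<longrightarrow> (\<exists>q\<in>set Q. z \<le> snd q) \<longrightarrow>
              (\<exists>x\<in>F - {x0}. fst x \<le> z \<and> z \<le> snd x) \<or> (\<exists>q\<in>set Q. fst q \<le> z \<and> z \<le> snd q))"
          using less.hyps[OF card, of "p - (a0 - r)" c0] less.prems False by auto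
        show ?thesis
        proof (rule exI[of _ "(r, a0) # Q"], intro conjI)
          show "\<forall>q\<in>set ((r, a0) # Q). r \<le> fst q \<and> fst q < snd q" using Q ra ac by force
          show "sum_list (map piece_len ((r, a0) # Q)) = p" using Q by (simp add: piece_len_def)
          show "sorted_wrt (\<lambda>x y. snd x \<le> fst y) ((r, a0) # Q)" using Q ac by force
          show "\<forall>q\<in>set ((r, a0) # Q). \<forall>x\<in>F. snd q \<le> fst x \<or> snd x \<le> fst q"
          proof
            fix q assume q: "q \<in> set ((r, a0) # Q)"
            show "\<forall>x\<in>F. snd q \<le> fst x \<or> snd x \<le> fst q"
            proof (cases "q = (r, a0)")
              case True then show ?thesis using free by auto
            next
              case False
              then have "q \<in> set Q" using q by auto
              then show ?thesis using Q x0eq by (metis Diff_iff singletonD snd_conv)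
            qed
          qed
          show "\<forall>z\<ge>r. (\<exists>q\<in>set ((r, a0) # Q). z \<le> snd q) \<longrightarrow>
            (\<exists>x\<in>F. fst x \<le> z \<and> z \<le> snd x) \<or> (\<exists>q\<in>set ((r, a0) # Q). fst q \<le> z \<and> z \<le> snd q)"
          proof (intro allI impI)
            fix z assume z: "r \<le> z" "\<exists>q\<in>set ((r, a0) # Q). z \<le> snd q"
            show "(\<exists>x\<in>F. fst x \<le> z \<and> z \<le> snd x) \<or> (\<exists>q\<in>set ((r, a0) # Q). fst q \<le> z \<and> z \<le> snd q)"
            proof (cases "z \<le> c0")
              case True
              show ?thesis
              proof (cases "z \<le> a0")
                case True then show ?thesis using z by auto
              next
                case False then show ?thesis using \<open>z \<le> c0\<close> x0 x0eq by (metis fst_conv less_eq_real_def not_le snd_conv)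
              qed
            next
              case False
              then have "\<exists>q\<in>set Q. z \<le> snd q" using z ac by auto
              then have "(\<exists>x\<in>F - {x0}. fst x \<le> z \<and> z \<le> snd x) \<or> (\<exists>q\<in>set Q. fst q \<le> z \<and> z \<le> snd q)"
                using Q False by auto
              then show ?thesis by auto
            qed
          qed
        qed (use Q in auto)
      qed
    qed
  qed
qed

lemma TS:
  assumes "finite J" "k \<in> J" "X \<subseteq> J" "card X \<le> s"
  shows "r k + (\<Sum>i\<in>X. p i) \<in> time_set J r p s"
proof -
  define c where "c q = card {i\<in>X. p i = q}" for q
  have fX: "finite X" using assms finite_subset by blast
  have "(\<Sum>i\<in>X. p i) = (\<Sum>q\<in>p ` X. \<Sum>i\<in>{i\<in>X. p i = q}. p i)"
    using fX by (rule sum.image_gen)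
  also have "\<dots> = (\<Sum>q\<in>p ` X. real (c q) * q)"
    unfolding c_def by (intro sum.cong refl) simp
  also have "\<dots> = (\<Sum>q\<in>p ` J. real (c q) * q)"
  proof (rule sum.mono_neutral_left)
    show "finite (p ` J)" using assms by simp
    show "p ` X \<subseteq> p ` J" using assms by auto
    show "\<forall>i\<in>p ` J - p ` X. real (c i) * i = 0" unfolding c_def by (auto simp: card_eq_0_iff image_iff) metis
  qed
  finally have eq: "(\<Sum>i\<in>X. p i) = (\<Sum>q\<in>p ` J. real (c q) * q)" .
  have "\<forall>q\<in>p ` J. c q \<le> s"
  proof
    fix q show "c q \<le> s" unfolding c_def using card_mono[OF fX, of "{i\<in>X. p i = q}"] assms by auto
  qed
  then show ?thesis unfolding time_set_def eq using assms by blast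
qed



definition cov :: "'j sched \<Rightarrow> 'j set \<Rightarrow> real \<Rightarrow> bool" where
  "cov \<sigma> Y z \<longleftrightarrow> (\<exists>i\<in>Y. \<exists>u<length (\<sigma> i). fst (\<sigma> i ! u) \<le> z \<and> z \<le> snd (\<sigma> i ! u))"

definition wfs :: "'j set \<Rightarrow> 'j sched \<Rightarrow> ('j \<Rightarrow> real) \<Rightarrow> bool" where
  "wfs Y \<sigma> r \<longleftrightarrow> (\<forall>i\<in>Y. \<sigma> i \<noteq> [] \<and> (\<forall>ab\<in>set (\<sigma> i). r i \<le> fst ab \<and> fst ab < snd ab)) \<and>
     (\<forall>j\<in>Y. \<forall>k\<in>Y. \<forall>u<length (\<sigma> j). \<forall>v<length (\<sigma> k).
        (j, u) \<noteq> (k, v) \<longrightarrow>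
          snd (\<sigma> j ! u) \<le> fst (\<sigma> k ! v) \<or> snd (\<sigma> k ! v) \<le> fst (\<sigma> j ! u))"

lemma compl_ge: "u < length (\<sigma> i) \<Longrightarrow> snd (\<sigma> i ! u) \<le> completion_time \<sigma> i"
  unfolding completion_time_def by (intro Max_ge) auto

lemma start_le: "u < length (\<sigma> i) \<Longrightarrow> start_time \<sigma> i \<le> fst (\<sigma> i ! u)"
  unfolding start_time_def by (intro Min_le) auto

lemma compl_ex: "\<sigma> i \<noteq> [] \<Longrightarrow> \<exists>u<length (\<sigma> i). snd (\<sigma> i ! u) = completion_time \<sigma> i"
proof -
  assume "\<sigma> i \<noteq> []"
  then have "completion_time \<sigma> i \<in> snd ` set (\<sigma> i)" unfolding completion_time_def by (intro Max_in) auto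
  then show ?thesis by (auto simp: in_set_conv_nth) (metis fst_conv snd_conv)
qed

lemma start_ex: "\<sigma> i \<noteq> [] \<Longrightarrow> \<exists>u<length (\<sigma> i). fst (\<sigma> i ! u) = start_time \<sigma> i"
proof -
  assume "\<sigma> i \<noteq> []"
  then have "start_time \<sigma> i \<in> fst ` set (\<sigma> i)" unfolding start_time_def by (intro Min_in) auto
  then show ?thesis by (auto simp: in_set_conv_nth) (metis fst_conv snd_conv)
qed

lemma sum_pieces:
  assumes "finite X"
  shows "(\<Sum>(i,u)\<in>Sigma X (\<lambda>i. {..<length (\<sigma> i)}). snd (\<sigma> i ! u) - fst (\<sigma> i ! u))
       = (\<Sum>i\<in>X. sum_list (map piece_len (\<sigma> i)))"
proof -
  have "(\<Sum>(i,u)\<in>Sigma X (\<lambda>i. {..<length (\<sigma> i)}). snd (\<sigma> i ! u) - fst (\<sigma> i ! u))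
      = (\<Sum>i\<in>X. \<Sum>u\<in>{..<length (\<sigma> i)}. snd (\<sigma> i ! u) - fst (\<sigma> i ! u))"
    using assms by (subst sum.Sigma) auto
  also have "\<dots> = (\<Sum>i\<in>X. sum_list (map piece_len (\<sigma> i)))"
    by (intro sum.cong refl) (simp add: sum_list_sum_nth atLeast0LessThan piece_len_def)
  finally show ?thesis .
qed

lemma block:
  assumes fin: "finite Y" and wf: "wfs Y \<sigma> r"
    and INV: "\<forall>i\<in>Y. \<forall>z. r i \<le> z \<and> z \<le> completion_time \<sigma> i \<longrightarrow> cov \<sigma> Y z"
    and Ew: "\<exists>k\<in>Y. \<exists>u<length (\<sigma> k). fst (\<sigma> k ! u) < t \<and> (\<forall>z. fst (\<sigma> k ! u) \<le> z \<and> z < t \<longrightarrow> cov \<sigma> Y z)"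
    and H: "\<forall>i\<in>Y. (\<exists>u<length (\<sigma> i). fst (\<sigma> i ! u) < t) \<longrightarrow> completion_time \<sigma> i \<le> t"
  shows "\<exists>b X. X \<subseteq> Y \<and> (\<exists>k\<in>X. r k = b) \<and> (\<forall>i\<in>X. b \<le> r i) \<and>
           (\<Sum>i\<in>X. sum_list (map piece_len (\<sigma> i))) = t - b"
proof -
  define Ind where "Ind = Sigma Y (\<lambda>i. {..<length (\<sigma> i)})"
  have finInd: "finite Ind" unfolding Ind_def using fin by auto
  define P where "P k u \<longleftrightarrow> fst (\<sigma> k ! u) < t \<and> (\<forall>z. fst (\<sigma> k ! u) \<le> z \<and> z < t \<longrightarrow> cov \<sigma> Y z)" for k u
  define Es where "Es = (\<lambda>(k,u). fst (\<sigma> k ! u)) ` {(k,u)\<in>Ind. P k u}"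
  have finEs: "finite Es" unfolding Es_def using finInd by (intro finite_imageI) (auto intro: finite_subset)
  have neEs: "Es \<noteq> {}" unfolding Es_def Ind_def P_def using Ew by auto
  define b where "b = Min Es"
  have "b \<in> Es" unfolding b_def using finEs neEs by simp
  then obtain k0 u0 where k0: "k0 \<in> Y" "u0 < length (\<sigma> k0)" "P k0 u0" "b = fst (\<sigma> k0 ! u0)"
    unfolding Es_def Ind_def by auto
  have bt: "b < t" and bcov: "\<forall>z. b \<le> z \<and> z < t \<longrightarrow> cov \<sigma> Y z" using k0 unfolding P_def by auto
  have minb: "b \<le> fst (\<sigma> k ! u)" if "k \<in> Y" "u < length (\<sigma> k)" "P k u" for k u
  proof -
    have "fst (\<sigma> k ! u) \<in> Es" unfolding Es_def Ind_def using that by force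
    then show ?thesis unfolding b_def using finEs by simp
  qed
  have nostrad: "\<not> (fst (\<sigma> i ! u) < b \<and> b \<le> snd (\<sigma> i ! u))" if "i \<in> Y" "u < length (\<sigma> i)" for i u
  proof
    assume a: "fst (\<sigma> i ! u) < b \<and> b \<le> snd (\<sigma> i ! u)"
    have "P i u" unfolding P_def
    proof (intro conjI allI impI)
      show "fst (\<sigma> i ! u) < t" using a bt by simp
      fix z assume z: "fst (\<sigma> i ! u) \<le> z \<and> z < t"
      show "cov \<sigma> Y z"
      proof (cases "z < b")
        case True then show ?thesis unfolding cov_def using that z a by force
      next
        case False then show ?thesis using bcov z by simp
      qed
    qed
    then show False using minb[OF that] a by simp
  qed
  define X where "X = {i\<in>Y. \<exists>u<length (\<sigma> i). b \<le> fst (\<sigma> i ! u) \<and> fst (\<sigma> i ! u) < t}"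
  have XY: "X \<subseteq> Y" unfolding X_def by auto
  have finX: "finite X" using XY fin finite_subset by blast
  have R: "b \<le> r i" if "i \<in> X" for i
  proof (rule ccontr)
    assume "\<not> b \<le> r i"
    then have rb: "r i < b" by simp
    from that obtain u where u: "i \<in> Y" "u < length (\<sigma> i)" "b \<le> fst (\<sigma> i ! u)" "fst (\<sigma> i ! u) < t"
      unfolding X_def by auto
    have pos: "fst (\<sigma> i ! u) < snd (\<sigma> i ! u)" using wf u unfolding wfs_def by (meson nth_mem)
    have bC: "b \<le> completion_time \<sigma> i" using compl_ge[of u \<sigma> i, OF u(2)] u pos by linarith
    have "cov \<sigma> Y (r i)" using INV u(1) bC rb by auto
    then obtain k v where kv: "k \<in> Y" "v < length (\<sigma> k)" "fst (\<sigma> k ! v) \<le> r i" "r i \<le> snd (\<sigma> k ! v)"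
      unfolding cov_def by auto
    have "P k v" unfolding P_def
    proof (intro conjI allI impI)
      show "fst (\<sigma> k ! v) < t" using kv rb bt by simp
      fix z assume z: "fst (\<sigma> k ! v) \<le> z \<and> z < t"
      show "cov \<sigma> Y z"
      proof (cases "z \<le> r i")
        case True then show ?thesis unfolding cov_def using kv z by force
      next
        case False
        show ?thesis
        proof (cases "z < b")
          case True then show ?thesis using INV u(1) bC False by auto
        next
          case False then show ?thesis using bcov z by simp
        qed
      qed
    qed
    then show False using minb[OF kv(1,2)] kv rb by simp
  qed
  have k0X: "k0 \<in> X" unfolding X_def using k0 bt by auto
  have rk0: "r k0 = b"
  proof -
    have "r k0 \<le> fst (\<sigma> k0 ! u0)" using wf k0 unfolding wfs_def by (meson nth_mem)
    then show ?thesis using R[OF k0X] k0 by simp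
  qed
  define IX where "IX = Sigma X (\<lambda>i. {..<length (\<sigma> i)})"
  have finIX: "finite IX" unfolding IX_def using finX by auto
  define g where "g = (\<lambda>(i,u). \<sigma> i ! u)"
  have inside: "\<forall>iu\<in>IX. b \<le> fst (g iu) \<and> fst (g iu) < snd (g iu) \<and> snd (g iu) \<le> t"
  proof
    fix iu assume "iu \<in> IX"
    then obtain i u where iu: "iu = (i,u)" "i \<in> X" "u < length (\<sigma> i)" unfolding IX_def by auto
    have iY: "i \<in> Y" using iu XY by auto
    have a: "r i \<le> fst (\<sigma> i ! u) \<and> fst (\<sigma> i ! u) < snd (\<sigma> i ! u)" using wf iY iu unfolding wfs_def by (meson nth_mem)
    obtain u' where u': "u' < length (\<sigma> i)" "fst (\<sigma> i ! u') < t" using iu(2) unfolding X_def by auto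
    have "completion_time \<sigma> i \<le> t" using H iY u' by blast
    then have "snd (\<sigma> i ! u) \<le> t" using compl_ge[of u \<sigma> i, OF iu(3)] by simp
    then show "b \<le> fst (g iu) \<and> fst (g iu) < snd (g iu) \<and> snd (g iu) \<le> t"
      using a R[OF iu(2)] iu unfolding g_def by auto
  qed
  have sep: "\<forall>iu\<in>IX. \<forall>kv\<in>IX. iu \<noteq> kv \<longrightarrow> snd (g iu) \<le> fst (g kv) \<or> snd (g kv) \<le> fst (g iu)"
  proof (intro ballI impI)
    fix iu kv assume a: "iu \<in> IX" "kv \<in> IX" "iu \<noteq> kv"
    obtain i u k v where e: "iu = (i,u)" "kv = (k,v)" by fastforce
    have "i \<in> Y" "k \<in> Y" "u < length (\<sigma> i)" "v < length (\<sigma> k)" using a XY e unfolding IX_def by auto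
    then show "snd (g iu) \<le> fst (g kv) \<or> snd (g kv) \<le> fst (g iu)"
      using wf a e unfolding wfs_def g_def by simp
  qed
  have covX: "\<forall>z. b \<le> z \<and> z < t \<longrightarrow> (\<exists>iu\<in>IX. fst (g iu) \<le> z \<and> z \<le> snd (g iu))"
  proof (intro allI impI)
    fix z assume z: "b \<le> z \<and> z < t"
    then have "cov \<sigma> Y z" using bcov by simp
    then obtain i u where iu: "i \<in> Y" "u < length (\<sigma> i)" "fst (\<sigma> i ! u) \<le> z" "z \<le> snd (\<sigma> i ! u)"
      unfolding cov_def by auto
    have "b \<le> fst (\<sigma> i ! u)" using nostrad[OF iu(1,2)] iu z by linarith
    then have "i \<in> X" unfolding X_def using iu z by auto
    then show "\<exists>iu\<in>IX. fst (g iu) \<le> z \<and> z \<le> snd (g iu)" unfolding IX_def g_def using iu by force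
  qed
  have s1: "(\<Sum>iu\<in>IX. snd (g iu) - fst (g iu)) \<le> t - b"
    by (rule L1[OF finIX _ inside sep]) (use bt in simp)
  have s2: "t - b \<le> (\<Sum>iu\<in>IX. snd (g iu) - fst (g iu))"
    by (rule L2[OF finIX _ _ sep covX]) (use bt inside in auto)
  have "(\<Sum>iu\<in>IX. snd (g iu) - fst (g iu)) = (\<Sum>i\<in>X. sum_list (map piece_len (\<sigma> i)))"
    unfolding IX_def g_def using sum_pieces[OF finX, of \<sigma>] by (simp add: case_prod_unfold)
  then show ?thesis using s1 s2 XY k0X rk0 R by (intro exI[of _ b] exI[of _ X]) auto
qed



lemma rank:
  fixes g :: "'j \<Rightarrow> real"
  assumes "finite S"
  shows "\<exists>\<rho>::'j\<Rightarrow>nat. inj_on \<rho> S \<and> (\<forall>i\<in>S. \<forall>j\<in>S. \<rho> i \<le> \<rho> j \<longrightarrow> g i \<le> g j)"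
proof -
  obtain xs where xs: "distinct xs" "set xs = S" using finite_distinct_list[OF assms] by blast
  define ys where "ys = sort_key g xs"
  have ys: "distinct ys" "set ys = S" "sorted (map g ys)" unfolding ys_def using xs by auto
  define \<rho> where "\<rho> j = (THE n. n < length ys \<and> ys ! n = j)" for j
  have rh: "\<rho> j < length ys \<and> ys ! \<rho> j = j" if "j \<in> S" for j
    unfolding \<rho>_def by (rule theI') (use distinct_Ex1[OF ys(1)] ys(2) that in auto)
  have "inj_on \<rho> S" by (rule inj_onI) (metis rh)
  moreover have "\<forall>i\<in>S. \<forall>j\<in>S. \<rho> i \<le> \<rho> j \<longrightarrow> g i \<le> g j"
  proof (intro ballI impI)
    fix i j assume a: "i \<in> S" "j \<in> S" "\<rho> i \<le> \<rho> j"
    have h: "\<forall>a b. a \<le> b \<longrightarrow> b < length ys \<longrightarrow> g (ys!a) \<le> g (ys!b)"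
      using ys(3) unfolding sorted_iff_nth_mono by auto
    have "g (ys ! \<rho> i) \<le> g (ys ! \<rho> j)"
      using h[rule_format, OF a(3)] rh[OF a(2)] by blast
    then show "g i \<le> g j" using rh[OF a(1)] rh[OF a(2)] by simp
  qed
  ultimately show ?thesis by blast
qed

lemma build:
  fixes r p :: "'j \<Rightarrow> real" and \<rho> :: "'j \<Rightarrow> nat"
  assumes "finite S0" "\<forall>j\<in>S0. p j > 0" "inj_on \<rho> S0"
  shows "S \<subseteq> S0 \<Longrightarrow> \<exists>\<sigma>. wfs S \<sigma> r \<and> (\<forall>i\<in>S. sum_list (map piece_len (\<sigma> i)) = p i) \<and>
     (\<forall>i\<in>S. \<forall>z. r i \<le> z \<and> z \<le> completion_time \<sigma> i \<longrightarrow> cov \<sigma> {k\<in>S. \<rho> k \<le> \<rho> i} z)"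
proof (induction "card S" arbitrary: S rule: less_induct)
  case less
  have finS: "finite S" using less.prems assms(1) finite_subset by blast
  show ?case
  proof (cases "S = {}")
    case True then show ?thesis by (auto simp: wfs_def)
  next
    case False
    obtain j where j: "j \<in> S" "\<forall>i\<in>S. \<rho> i \<le> \<rho> j" using ex_max_on[OF finS False, of \<rho>] by blast
    define S' where "S' = S - {j}"
    have card: "card S' < card S" unfolding S'_def using j finS by (meson card_Diff1_less)
    obtain \<sigma>0 where s0: "wfs S' \<sigma>0 r" "\<forall>i\<in>S'. sum_list (map piece_len (\<sigma>0 i)) = p i"
      "\<forall>i\<in>S'. \<forall>z. r i \<le> z \<and> z \<le> completion_time \<sigma>0 i \<longrightarrow> cov \<sigma>0 {k\<in>S'. \<rho> k \<le> \<rho> i} z"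
      using less.hyps[OF card] less.prems unfolding S'_def by auto
    define F where "F = (\<Union>i\<in>S'. set (\<sigma>0 i))"
    have finF: "finite F" unfolding F_def S'_def using finS by auto
    have posF: "\<forall>x\<in>F. fst x < snd x" using s0(1) unfolding F_def wfs_def by auto
    have pj: "0 < p j" using assms(2) j less.prems by auto
    obtain Q where Q: "Q \<noteq> []" "\<forall>q\<in>set Q. r j \<le> fst q \<and> fst q < snd q"
      "sum_list (map piece_len Q) = p j" "sorted_wrt (\<lambda>x y. snd x \<le> fst y) Q"
      "\<forall>q\<in>set Q. \<forall>x\<in>F. snd q \<le> fst x \<or> snd x \<le> fst q"
      "\<forall>z. r j \<le> z \<longrightarrow> (\<exists>q\<in>set Q. z \<le> snd q) \<longrightarrow>
        (\<exists>x\<in>F. fst x \<le> z \<and> z \<le> snd x) \<or> (\<exists>q\<in>set Q. fst q \<le> z \<and> z \<le> snd q)"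
      using fill[OF finF posF pj, of "r j"] by blast
    define \<sigma> where "\<sigma> = \<sigma>0(j := Q)"
    have jS': "j \<notin> S'" unfolding S'_def by simp
    have SS: "S = insert j S'" unfolding S'_def using j by auto
    have sepQ: "snd (Q ! u) \<le> fst (Q ! v) \<or> snd (Q ! v) \<le> fst (Q ! u)"
      if "u < length Q" "v < length Q" "u \<noteq> v" for u v
    proof (cases "u < v")
      case True then show ?thesis using Q(4) that unfolding sorted_wrt_iff_nth_less by auto
    next
      case False then have "v < u" using that by simp
      then show ?thesis using Q(4) that unfolding sorted_wrt_iff_nth_less by auto
    qed
    have wf: "wfs S \<sigma> r"
      unfolding wfs_def
    proof (intro conjI ballI allI impI)
      fix i assume "i \<in> S"
      then show "\<sigma> i \<noteq> []" using Q(1) s0(1) SS unfolding \<sigma>_def wfs_def by auto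
    next
      fix i ab assume "i \<in> S" "ab \<in> set (\<sigma> i)"
      then show "r i \<le> fst ab" "fst ab < snd ab" using Q(2) s0(1) SS unfolding \<sigma>_def wfs_def
        by (auto split: if_splits)
    next
      fix i k u v assume a: "i \<in> S" "k \<in> S" "u < length (\<sigma> i)" "v < length (\<sigma> k)" "(i, u) \<noteq> (k, v)"
      show "snd (\<sigma> i ! u) \<le> fst (\<sigma> k ! v) \<or> snd (\<sigma> k ! v) \<le> fst (\<sigma> i ! u)"
      proof (cases "i = j")
        case True
        show ?thesis
        proof (cases "k = j")
          case True
          then show ?thesis using \<open>i = j\<close> a sepQ unfolding \<sigma>_def by auto
        next
          case False
          then have kS': "k \<in> S'" using a SS by auto
          have "\<sigma> k ! v \<in> F" unfolding F_def using kS' a False by (auto simp: \<sigma>_def intro!: bexI[of _ k])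
          moreover have "\<sigma> i ! u \<in> set Q" using \<open>i = j\<close> a unfolding \<sigma>_def by auto
          ultimately show ?thesis using Q(5) by blast
        qed
      next
        case False
        then have iS': "i \<in> S'" using a SS by auto
        show ?thesis
        proof (cases "k = j")
          case True
          have "\<sigma> i ! u \<in> F" unfolding F_def using iS' a False by (auto simp: \<sigma>_def intro!: bexI[of _ i])
          moreover have "\<sigma> k ! v \<in> set Q" using True a unfolding \<sigma>_def by auto
          ultimately show ?thesis using Q(5) by blast
        next
          case False
          then have kS': "k \<in> S'" using a SS by auto
          then show ?thesis using s0(1) iS' a \<open>i \<noteq> j\<close> False unfolding wfs_def \<sigma>_def by auto
        qed
      qed
    qed
    have sums: "\<forall>i\<in>S. sum_list (map piece_len (\<sigma> i)) = p i"
      using Q(3) s0(2) SS unfolding \<sigma>_def by auto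
    have inv: "\<forall>i\<in>S. \<forall>z. r i \<le> z \<and> z \<le> completion_time \<sigma> i \<longrightarrow> cov \<sigma> {k\<in>S. \<rho> k \<le> \<rho> i} z"
    proof (intro ballI allI impI)
      fix i z assume a: "i \<in> S" "r i \<le> z \<and> z \<le> completion_time \<sigma> i"
      show "cov \<sigma> {k\<in>S. \<rho> k \<le> \<rho> i} z"
      proof (cases "i = j")
        case True
        obtain u where u: "u < length Q" "snd (Q ! u) = completion_time \<sigma> j"
          using compl_ex[of \<sigma> j] Q(1) unfolding \<sigma>_def by auto
        have "\<exists>q\<in>set Q. z \<le> snd q" using u a True by (metis nth_mem)
        then have "(\<exists>x\<in>F. fst x \<le> z \<and> z \<le> snd x) \<or> (\<exists>q\<in>set Q. fst q \<le> z \<and> z \<le> snd q)"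
          using Q(6) a True by auto
        then show ?thesis
        proof
          assume "\<exists>x\<in>F. fst x \<le> z \<and> z \<le> snd x"
          then obtain k x where kx: "k \<in> S'" "x \<in> set (\<sigma>0 k)" "fst x \<le> z" "z \<le> snd x" unfolding F_def by auto
          then obtain v where "v < length (\<sigma>0 k)" "\<sigma>0 k ! v = x" by (auto simp: in_set_conv_nth)
          moreover have "k \<noteq> j" using kx jS' by auto
          ultimately show ?thesis unfolding cov_def \<sigma>_def using kx True j SS by (intro bexI[of _ k]) auto
        next
          assume "\<exists>q\<in>set Q. fst q \<le> z \<and> z \<le> snd q"
          then obtain v where "v < length Q" "fst (Q ! v) \<le> z" "z \<le> snd (Q ! v)" by (auto simp: in_set_conv_nth)
          then show ?thesis unfolding cov_def \<sigma>_def using True j by (intro bexI[of _ j]) auto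
        qed
      next
        case False
        then have iS': "i \<in> S'" using a SS by auto
        have "completion_time \<sigma> i = completion_time \<sigma>0 i" unfolding \<sigma>_def using False by (simp add: completion_time_def)
        then have "cov \<sigma>0 {k\<in>S'. \<rho> k \<le> \<rho> i} z" using s0(3) iS' a by auto
        then obtain k v where kv: "k \<in> S'" "\<rho> k \<le> \<rho> i" "v < length (\<sigma>0 k)" "fst (\<sigma>0 k ! v) \<le> z" "z \<le> snd (\<sigma>0 k ! v)"
          unfolding cov_def by auto
        have "k \<noteq> j" using kv jS' by auto
        then show ?thesis unfolding cov_def \<sigma>_def using kv SS by (intro bexI[of _ k]) auto
      qed
    qed
    show ?thesis using wf sums inv by blast
  qed
qed



lemma wfs_mono: "Y \<subseteq> S \<Longrightarrow> wfs S \<sigma> r \<Longrightarrow> wfs Y \<sigma> r"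
  unfolding wfs_def by blast

lemma cov_mono: "Y \<subseteq> Y' \<Longrightarrow> cov \<sigma> Y z \<Longrightarrow> cov \<sigma> Y' z"
  unfolding cov_def by blast

lemma key:
  assumes finJ: "finite J" and pp: "\<forall>j\<in>J. p j > 0" and fe: "feasible J r p s S \<sigma>'"
  shows "\<exists>\<sigma>. feasible J r p s S \<sigma> \<and> (\<forall>j\<in>S. start_time \<sigma> j \<in> time_set J r p s \<and>
     completion_time \<sigma> j \<in> time_set J r p s \<and> completion_time \<sigma> j \<le> completion_time \<sigma>' j)"
proof -
  have SJ: "S \<subseteq> J" and cS: "card S \<le> s" using fe unfolding feasible_def by auto
  have finS: "finite S" using SJ finJ finite_subset by blast
  have wf': "wfs S \<sigma>' r" using fe unfolding feasible_def wfs_def by blast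
  have sums': "\<forall>i\<in>S. sum_list (map piece_len (\<sigma>' i)) = p i" using fe unfolding feasible_def by blast
  obtain \<rho> :: "'a \<Rightarrow> nat" where rho: "inj_on \<rho> S" "\<forall>i\<in>S. \<forall>j\<in>S. \<rho> i \<le> \<rho> j \<longrightarrow> completion_time \<sigma>' i \<le> completion_time \<sigma>' j"
    using rank[OF finS] by blast
  have ppS: "\<forall>j\<in>S. p j > 0" using pp SJ by auto
  obtain \<sigma> where sg: "wfs S \<sigma> r" "\<forall>i\<in>S. sum_list (map piece_len (\<sigma> i)) = p i"
     "\<forall>i\<in>S. \<forall>z. r i \<le> z \<and> z \<le> completion_time \<sigma> i \<longrightarrow> cov \<sigma> {k\<in>S. \<rho> k \<le> \<rho> i} z"
    using build[OF finS ppS rho(1), of S r] by blast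
  have feas: "feasible J r p s S \<sigma>" using sg(1,2) SJ cS unfolding feasible_def wfs_def by blast
  have rle: "r i \<le> fst (\<sigma> i ! u)" "fst (\<sigma> i ! u) < snd (\<sigma> i ! u)" if "i \<in> S" "u < length (\<sigma> i)" for i u
    using sg(1) that unfolding wfs_def by (meson nth_mem)+
  have sepg: "snd (\<sigma> i ! u) \<le> fst (\<sigma> k ! v) \<or> snd (\<sigma> k ! v) \<le> fst (\<sigma> i ! u)"
    if "i \<in> S" "k \<in> S" "u < length (\<sigma> i)" "v < length (\<sigma> k)" "i \<noteq> k" for i k u v
    using sg(1) that unfolding wfs_def by blast
  have ne: "\<sigma> i \<noteq> []" if "i \<in> S" for i using sg(1) that unfolding wfs_def by blast
  have TSX: "r k + (\<Sum>i\<in>X. p i) \<in> time_set J r p s" if "k \<in> S" "X \<subseteq> S" for k X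
  proof (rule TS[OF finJ])
    show "k \<in> J" "X \<subseteq> J" using that SJ by auto
    show "card X \<le> s" using card_mono[OF finS that(2)] cS by simp
  qed
  have "\<forall>j\<in>S. start_time \<sigma> j \<in> time_set J r p s \<and>
     completion_time \<sigma> j \<in> time_set J r p s \<and> completion_time \<sigma> j \<le> completion_time \<sigma>' j"
  proof
    fix j assume jS: "j \<in> S"
    define t where "t = completion_time \<sigma> j"
    define Y where "Y = {i\<in>S. \<rho> i \<le> \<rho> j}"
    have YS: "Y \<subseteq> S" unfolding Y_def by auto
    obtain um where um: "um < length (\<sigma> j)" "snd (\<sigma> j ! um) = t" using compl_ex[of \<sigma> j, OF ne[OF jS]] t_def by blast
    have "\<exists>b X. X \<subseteq> Y \<and> (\<exists>k\<in>X. r k = b) \<and> (\<forall>i\<in>X. b \<le> r i) \<and>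
           (\<Sum>i\<in>X. sum_list (map piece_len (\<sigma> i))) = t - b"
    proof (rule block)
      show "finite Y" using YS finS finite_subset by blast
      show "wfs Y \<sigma> r" using wfs_mono[OF YS sg(1)] .
      show "\<forall>i\<in>Y. \<forall>z. r i \<le> z \<and> z \<le> completion_time \<sigma> i \<longrightarrow> cov \<sigma> Y z"
      proof (intro ballI allI impI)
        fix i z assume a: "i \<in> Y" "r i \<le> z \<and> z \<le> completion_time \<sigma> i"
        then have iS: "i \<in> S" and ri: "\<rho> i \<le> \<rho> j" unfolding Y_def by auto
        have "cov \<sigma> {k\<in>S. \<rho> k \<le> \<rho> i} z" using sg(3) iS a(2) by blast
        moreover have "{k\<in>S. \<rho> k \<le> \<rho> i} \<subseteq> Y" using ri unfolding Y_def by auto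
        ultimately show "cov \<sigma> Y z" using cov_mono by blast
      qed
      show "\<exists>k\<in>Y. \<exists>u<length (\<sigma> k). fst (\<sigma> k ! u) < t \<and> (\<forall>z. fst (\<sigma> k ! u) \<le> z \<and> z < t \<longrightarrow> cov \<sigma> Y z)"
      proof (intro bexI[of _ j] exI[of _ um] conjI allI impI)
        show "um < length (\<sigma> j)" by (rule um)
        show "fst (\<sigma> j ! um) < t" using rle[OF jS um(1)] um by simp
        fix z assume "fst (\<sigma> j ! um) \<le> z \<and> z < t"
        then show "cov \<sigma> Y z" unfolding cov_def Y_def using jS um by (intro bexI[of _ j]) auto
      qed (use jS Y_def in auto)
      show "\<forall>i\<in>Y. (\<exists>u<length (\<sigma> i). fst (\<sigma> i ! u) < t) \<longrightarrow> completion_time \<sigma> i \<le> t"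
      proof (intro ballI impI)
        fix i assume iY: "i \<in> Y" and "\<exists>u<length (\<sigma> i). fst (\<sigma> i ! u) < t"
        then obtain u where u: "u < length (\<sigma> i)" "fst (\<sigma> i ! u) < t" by blast
        have iS: "i \<in> S" using iY YS by auto
        show "completion_time \<sigma> i \<le> t"
        proof (rule ccontr)
          assume "\<not> completion_time \<sigma> i \<le> t"
          then have Ct: "t < completion_time \<sigma> i" by simp
          then have ij: "i \<noteq> j" using t_def by auto
          have "\<rho> i \<noteq> \<rho> j" using rho(1) iS jS ij by (meson inj_onD)
          then have rij: "\<rho> i < \<rho> j" using iY unfolding Y_def by auto
          define am where "am = fst (\<sigma> j ! um)"
          have amt: "am < t" using rle[OF jS um(1)] um am_def by simp
          define z where "z = (max (fst (\<sigma> i ! u)) am + t) / 2"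
          have z1: "am < z" "z < t" "fst (\<sigma> i ! u) \<le> z" using amt u unfolding z_def by auto
          have "r i \<le> z \<and> z \<le> completion_time \<sigma> i" using rle[OF iS u(1)] z1 Ct by linarith
          then have "cov \<sigma> {k\<in>S. \<rho> k \<le> \<rho> i} z" using sg(3) iS by blast
          then obtain k v where kv: "k \<in> S" "\<rho> k \<le> \<rho> i" "v < length (\<sigma> k)" "fst (\<sigma> k ! v) \<le> z" "z \<le> snd (\<sigma> k ! v)"
            unfolding cov_def by auto
          have "k \<noteq> j" using kv rij by auto
          then have "snd (\<sigma> k ! v) \<le> fst (\<sigma> j ! um) \<or> snd (\<sigma> j ! um) \<le> fst (\<sigma> k ! v)"
            using sepg[OF kv(1) jS kv(3) um(1)] by blast
          then show False using kv z1 um am_def by linarith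
        qed
      qed
    qed
    then obtain b X where bX: "X \<subseteq> Y" "\<exists>k\<in>X. r k = b" "\<forall>i\<in>X. b \<le> r i"
        "(\<Sum>i\<in>X. sum_list (map piece_len (\<sigma> i))) = t - b" by blast
    obtain k where k: "k \<in> X" "r k = b" using bX by blast
    have XS: "X \<subseteq> S" using bX YS by auto
    have finX: "finite X" using XS finS finite_subset by blast
    have "(\<Sum>i\<in>X. p i) = (\<Sum>i\<in>X. sum_list (map piece_len (\<sigma> i)))" using sg(2) XS by (intro sum.cong) auto
    then have sumX: "(\<Sum>i\<in>X. p i) = t - b" using bX(4) by simp
    have tT: "t \<in> time_set J r p s" using TSX[OF _ XS, of k] k XS sumX by auto
    have sumX': "(\<Sum>i\<in>X. p i) = (\<Sum>i\<in>X. sum_list (map piece_len (\<sigma>' i)))" using sums' XS by (intro sum.cong) auto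
    have rle': "r i \<le> fst (\<sigma>' i ! u)" "fst (\<sigma>' i ! u) < snd (\<sigma>' i ! u)" if "i \<in> S" "u < length (\<sigma>' i)" for i u
      using wf' that unfolding wfs_def by (meson nth_mem)+
    have ne': "\<sigma>' i \<noteq> []" if "i \<in> S" for i using wf' that unfolding wfs_def by blast
    have CX: "completion_time \<sigma>' i \<le> completion_time \<sigma>' j" if "i \<in> X" for i
    proof -
      have "i \<in> S" "\<rho> i \<le> \<rho> j" using that bX(1) unfolding Y_def by auto
      then show ?thesis using rho(2) jS by blast
    qed
    have bC: "b \<le> completion_time \<sigma>' j"
    proof -
      have kS: "k \<in> S" using k XS by auto
      have "0 < length (\<sigma>' k)" using ne'[OF kS] by simp
      then show ?thesis using rle'[OF kS, of 0] compl_ge[of 0 \<sigma>' k] CX[OF k(1)] k by linarith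
    qed
    have A1: "finite (Sigma X (\<lambda>i. {..<length (\<sigma>' i)}))" using finX by auto
    have A2: "\<forall>iu\<in>Sigma X (\<lambda>i. {..<length (\<sigma>' i)}). b \<le> fst (case iu of (i, u) \<Rightarrow> \<sigma>' i ! u) \<and>
        fst (case iu of (i, u) \<Rightarrow> \<sigma>' i ! u) < snd (case iu of (i, u) \<Rightarrow> \<sigma>' i ! u) \<and>
        snd (case iu of (i, u) \<Rightarrow> \<sigma>' i ! u) \<le> completion_time \<sigma>' j"
    proof
      fix iu assume "iu \<in> Sigma X (\<lambda>i. {..<length (\<sigma>' i)})"
      then obtain i u where iu: "iu = (i,u)" "i \<in> X" "u < length (\<sigma>' i)" by auto
      have iS: "i \<in> S" using iu XS by auto
      show "b \<le> fst (case iu of (i, u) \<Rightarrow> \<sigma>' i ! u) \<and>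
        fst (case iu of (i, u) \<Rightarrow> \<sigma>' i ! u) < snd (case iu of (i, u) \<Rightarrow> \<sigma>' i ! u) \<and>
        snd (case iu of (i, u) \<Rightarrow> \<sigma>' i ! u) \<le> completion_time \<sigma>' j"
        using rle'[OF iS iu(3)] bX(3) iu compl_ge[of u \<sigma>' i, OF iu(3)] CX[OF iu(2)] by auto
    qed
    have A3: "\<forall>iu\<in>Sigma X (\<lambda>i. {..<length (\<sigma>' i)}). \<forall>kv\<in>Sigma X (\<lambda>i. {..<length (\<sigma>' i)}). iu \<noteq> kv \<longrightarrow>
         snd (case iu of (i, u) \<Rightarrow> \<sigma>' i ! u) \<le> fst (case kv of (i, u) \<Rightarrow> \<sigma>' i ! u) \<or>
         snd (case kv of (i, u) \<Rightarrow> \<sigma>' i ! u) \<le> fst (case iu of (i, u) \<Rightarrow> \<sigma>' i ! u)"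
    proof (intro ballI impI)
      fix iu kv assume a: "iu \<in> Sigma X (\<lambda>i. {..<length (\<sigma>' i)})" "kv \<in> Sigma X (\<lambda>i. {..<length (\<sigma>' i)})" "iu \<noteq> kv"
      obtain i u k v where e: "iu = (i,u)" "kv = (k,v)" by fastforce
      have "i \<in> S" "k \<in> S" "u < length (\<sigma>' i)" "v < length (\<sigma>' k)" using a XS e by auto
      then show "snd (case iu of (i, u) \<Rightarrow> \<sigma>' i ! u) \<le> fst (case kv of (i, u) \<Rightarrow> \<sigma>' i ! u) \<or>
         snd (case kv of (i, u) \<Rightarrow> \<sigma>' i ! u) \<le> fst (case iu of (i, u) \<Rightarrow> \<sigma>' i ! u)"
        using wf' a e unfolding wfs_def by simp
    qed
    have "(\<Sum>(i,u)\<in>Sigma X (\<lambda>i. {..<length (\<sigma>' i)}). snd (\<sigma>' i ! u) - fst (\<sigma>' i ! u)) \<le> completion_time \<sigma>' j - b"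
      using L1[OF A1 bC A2 A3] by (simp add: case_prod_unfold)
    then have "t - b \<le> completion_time \<sigma>' j - b" using sum_pieces[OF finX, of \<sigma>'] sumX sumX' by simp
    then have tC: "t \<le> completion_time \<sigma>' j" by simp
    define x0 where "x0 = start_time \<sigma> j"
    obtain u0 where u0: "u0 < length (\<sigma> j)" "fst (\<sigma> j ! u0) = x0" using start_ex[of \<sigma> j, OF ne[OF jS]] x0_def by blast
    have sT: "x0 \<in> time_set J r p s"
    proof (cases "x0 = r j")
      case True then show ?thesis using TSX[OF jS, of "{}"] by simp
    next
      case False
      then have rx: "r j < x0" using rle[OF jS u0(1)] u0 by simp
      define Y2 where "Y2 = {i\<in>S. \<rho> i < \<rho> j}"
      have Y2S: "Y2 \<subseteq> S" unfolding Y2_def by auto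
      have jx: "x0 \<le> fst (\<sigma> j ! v)" if "v < length (\<sigma> j)" for v using start_le[of v \<sigma> j, OF that] x0_def by simp
      define y0 where "y0 = snd (\<sigma> j ! u0)"
      have xy: "x0 < y0" using rle[OF jS u0(1)] u0 y0_def by simp
      have Cj: "y0 \<le> completion_time \<sigma> j" using compl_ge[of u0 \<sigma> j, OF u0(1)] y0_def by simp
      have covj: "cov \<sigma> Y2 z" if "r j \<le> z" "z < x0" for z
      proof -
        have "cov \<sigma> {k\<in>S. \<rho> k \<le> \<rho> j} z" using sg(3) jS that xy Cj by auto
        then obtain k v where kv: "k \<in> S" "\<rho> k \<le> \<rho> j" "v < length (\<sigma> k)" "fst (\<sigma> k ! v) \<le> z" "z \<le> snd (\<sigma> k ! v)"
          unfolding cov_def by auto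
        have "k \<noteq> j"
        proof
          assume "k = j" then have "x0 \<le> fst (\<sigma> k ! v)" using jx kv by simp
          then show False using kv that by linarith
        qed
        then have "\<rho> k < \<rho> j" using kv rho(1) jS unfolding inj_on_def by (metis le_neq_implies_less)
        then show ?thesis unfolding cov_def Y2_def using kv by blast
      qed
      have "\<exists>b X. X \<subseteq> Y2 \<and> (\<exists>k\<in>X. r k = b) \<and> (\<forall>i\<in>X. b \<le> r i) \<and>
           (\<Sum>i\<in>X. sum_list (map piece_len (\<sigma> i))) = x0 - b"
      proof (rule block)
        show "finite Y2" using Y2S finS finite_subset by blast
        show "wfs Y2 \<sigma> r" using wfs_mono[OF Y2S sg(1)] .
        show "\<forall>i\<in>Y2. \<forall>z. r i \<le> z \<and> z \<le> completion_time \<sigma> i \<longrightarrow> cov \<sigma> Y2 z"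
        proof (intro ballI allI impI)
          fix i z assume a: "i \<in> Y2" "r i \<le> z \<and> z \<le> completion_time \<sigma> i"
          then have iS: "i \<in> S" and ri: "\<rho> i < \<rho> j" unfolding Y2_def by auto
          have "cov \<sigma> {k\<in>S. \<rho> k \<le> \<rho> i} z" using sg(3) iS a(2) by blast
          moreover have "{k\<in>S. \<rho> k \<le> \<rho> i} \<subseteq> Y2" using ri unfolding Y2_def by auto
          ultimately show "cov \<sigma> Y2 z" using cov_mono by blast
        qed
        obtain k v where kv: "k \<in> Y2" "v < length (\<sigma> k)" "fst (\<sigma> k ! v) \<le> r j" "r j \<le> snd (\<sigma> k ! v)"
          using covj[OF order.refl rx] unfolding cov_def by auto
        show "\<exists>k\<in>Y2. \<exists>u<length (\<sigma> k). fst (\<sigma> k ! u) < x0 \<and> (\<forall>z. fst (\<sigma> k ! u) \<le> z \<and> z < x0 \<longrightarrow> cov \<sigma> Y2 z)"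
        proof (intro bexI[OF _ kv(1)] exI[of _ v] conjI allI impI)
          show "v < length (\<sigma> k)" by (rule kv)
          show "fst (\<sigma> k ! v) < x0" using kv rx by simp
          fix z assume z: "fst (\<sigma> k ! v) \<le> z \<and> z < x0"
          show "cov \<sigma> Y2 z"
          proof (cases "z \<le> r j")
            case True then show ?thesis unfolding cov_def using kv z by force
          next
            case False then show ?thesis using covj z by simp
          qed
        qed
        show "\<forall>i\<in>Y2. (\<exists>u<length (\<sigma> i). fst (\<sigma> i ! u) < x0) \<longrightarrow> completion_time \<sigma> i \<le> x0"
        proof (intro ballI impI)
          fix i assume iY: "i \<in> Y2" and "\<exists>u<length (\<sigma> i). fst (\<sigma> i ! u) < x0"
          then obtain u where u: "u < length (\<sigma> i)" "fst (\<sigma> i ! u) < x0" by blast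
          have iS: "i \<in> S" using iY Y2S by auto
          have rij: "\<rho> i < \<rho> j" using iY unfolding Y2_def by auto
          show "completion_time \<sigma> i \<le> x0"
          proof (rule ccontr)
            assume "\<not> completion_time \<sigma> i \<le> x0"
            then have Ct: "x0 < completion_time \<sigma> i" by simp
            define z where "z = (x0 + min (completion_time \<sigma> i) y0) / 2"
            have z1: "x0 < z" "z < y0" "z \<le> completion_time \<sigma> i" using Ct xy unfolding z_def by auto
            have "r i \<le> z \<and> z \<le> completion_time \<sigma> i" using rle[OF iS u(1)] u z1 by linarith
            then have "cov \<sigma> {k\<in>S. \<rho> k \<le> \<rho> i} z" using sg(3) iS by blast
            then obtain k v where kv: "k \<in> S" "\<rho> k \<le> \<rho> i" "v < length (\<sigma> k)" "fst (\<sigma> k ! v) \<le> z" "z \<le> snd (\<sigma> k ! v)"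
              unfolding cov_def by auto
            have "k \<noteq> j" using kv rij by auto
            then have "snd (\<sigma> k ! v) \<le> fst (\<sigma> j ! u0) \<or> snd (\<sigma> j ! u0) \<le> fst (\<sigma> k ! v)"
              using sepg[OF kv(1) jS kv(3) u0(1)] by blast
            then show False using kv z1 u0 y0_def by linarith
          qed
        qed
      qed
      then obtain b X where bX: "X \<subseteq> Y2" "\<exists>k\<in>X. r k = b"
          "(\<Sum>i\<in>X. sum_list (map piece_len (\<sigma> i))) = x0 - b" by blast
      obtain k where k: "k \<in> X" "r k = b" using bX by blast
      have XS: "X \<subseteq> S" using bX Y2S by auto
      have "(\<Sum>i\<in>X. p i) = (\<Sum>i\<in>X. sum_list (map piece_len (\<sigma> i)))" using sg(2) XS by (intro sum.cong) auto
      then have sumX: "(\<Sum>i\<in>X. p i) = x0 - b" using bX(3) by simp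
      show ?thesis using TSX[OF _ XS, of k] k XS sumX by auto
    qed
    show "start_time \<sigma> j \<in> time_set J r p s \<and>
     completion_time \<sigma> j \<in> time_set J r p s \<and> completion_time \<sigma> j \<le> completion_time \<sigma>' j"
      using sT tT tC x0_def t_def by simp
  qed
  then show ?thesis using feas by blast
qed

theorem mainTheorem11:
  fixes J :: "'j set" and r p :: "'j \<Rightarrow> real" and f :: "'j \<Rightarrow> real \<Rightarrow> real" and s :: nat
  assumes "finite J"
    and "\<forall>j\<in>J. p j > 0"
    and "\<forall>j\<in>J. antimono (f j)"
  shows "\<exists>S \<sigma>. feasible J r p s S \<sigma> \<and>
           (\<forall>S' \<sigma>'. feasible J r p s S' \<sigma>' \<longrightarrow> profit f S' \<sigma>' \<le> profit f S \<sigma>) \<and>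
           (\<forall>j\<in>S. start_time \<sigma> j \<in> time_set J r p s \<and>
                   completion_time \<sigma> j \<in> time_set J r p s)"
proof -
  define T where "T = time_set J r p s"
  have finT: "finite T"
  proof (rule finite_subset)
    show "T \<subseteq> (\<lambda>(j', c). r j' + (\<Sum>q\<in>p ` J. real (c q) * q)) ` (J \<times> (p ` J \<rightarrow>\<^sub>E {..s}))"
    proof
      fix x assume "x \<in> T"
      then obtain j' c where jc: "x = r j' + (\<Sum>q\<in>p ` J. real (c q) * q)" "j' \<in> J" "\<forall>q\<in>p ` J. c q \<le> s"
        unfolding T_def time_set_def by blast
      have x1: "x = r j' + (\<Sum>q\<in>p ` J. real (restrict c (p ` J) q) * q)" using jc(1) by simp
      have x2: "(j', restrict c (p ` J)) \<in> J \<times> (p ` J \<rightarrow>\<^sub>E {..s})" using jc by auto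
      show "x \<in> (\<lambda>(j', c). r j' + (\<Sum>q\<in>p ` J. real (c q) * q)) ` (J \<times> (p ` J \<rightarrow>\<^sub>E {..s}))"
        by (rule image_eqI[where x="(j', restrict c (p ` J))", OF _ x2]) (simp add: x1)
    qed
    show "finite ((\<lambda>(j', c). r j' + (\<Sum>q\<in>p ` J. real (c q) * q)) ` (J \<times> (p ` J \<rightarrow>\<^sub>E {..s})))"
      using assms(1) by (intro finite_imageI finite_cartesian_product finite_PiE) auto
  qed
  define Good where "Good = {(S, \<sigma>). feasible J r p s S \<sigma> \<and>
     (\<forall>j\<in>S. start_time \<sigma> j \<in> T \<and> completion_time \<sigma> j \<in> T)}"
  define V where "V = (\<lambda>(S, \<sigma>). profit f S \<sigma>) ` Good"
  have finV: "finite V"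
  proof (rule finite_subset)
    show "V \<subseteq> (\<Union>S\<in>Pow J. (\<lambda>g. \<Sum>j\<in>S. f j (g j)) ` (S \<rightarrow>\<^sub>E T))"
    proof
      fix v assume "v \<in> V"
      then obtain S \<sigma> where S: "(S, \<sigma>) \<in> Good" "v = profit f S \<sigma>" unfolding V_def by auto
      have SJ: "S \<subseteq> J" using S unfolding Good_def feasible_def by auto
      have "restrict (completion_time \<sigma>) S \<in> S \<rightarrow>\<^sub>E T" using S unfolding Good_def by auto
      moreover have "v = (\<Sum>j\<in>S. f j (restrict (completion_time \<sigma>) S j))"
        using S(2) unfolding profit_def by simp
      ultimately show "v \<in> (\<Union>S\<in>Pow J. (\<lambda>g. \<Sum>j\<in>S. f j (g j)) ` (S \<rightarrow>\<^sub>E T))" using SJ by blast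
    qed
    show "finite (\<Union>S\<in>Pow J. (\<lambda>g. \<Sum>j\<in>S. f j (g j)) ` (S \<rightarrow>\<^sub>E T))"
      using assms(1) finT by (intro finite_UN_I finite_imageI finite_PiE) (auto intro: finite_subset)
  qed
  have "({}, \<lambda>_. []) \<in> Good" unfolding Good_def feasible_def by simp
  then have neV: "V \<noteq> {}" unfolding V_def by blast
  have "Max V \<in> V" using finV neV by simp
  then obtain S \<sigma> where S: "(S, \<sigma>) \<in> Good" "profit f S \<sigma> = Max V" unfolding V_def by auto
  have opt: "profit f S' \<sigma>' \<le> profit f S \<sigma>" if fe: "feasible J r p s S' \<sigma>'" for S' \<sigma>'
  proof -
    obtain \<sigma>'' where s'': "feasible J r p s S' \<sigma>''" "\<forall>j\<in>S'. start_time \<sigma>'' j \<in> time_set J r p s \<and>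
       completion_time \<sigma>'' j \<in> time_set J r p s \<and> completion_time \<sigma>'' j \<le> completion_time \<sigma>' j"
      using key[OF assms(1,2) fe] by blast
    have SJ: "S' \<subseteq> J" using fe unfolding feasible_def by auto
    have "profit f S' \<sigma>' \<le> profit f S' \<sigma>''"
      unfolding profit_def
    proof (rule sum_mono)
      fix j assume j: "j \<in> S'"
      then have "antimono (f j)" using assms(3) SJ by auto
      then show "f j (completion_time \<sigma>' j) \<le> f j (completion_time \<sigma>'' j)"
        using s''(2) j by (simp add: antimonoD)
    qed
    also have "\<dots> \<le> Max V"
    proof (rule Max_ge[OF finV])
      show "profit f S' \<sigma>'' \<in> V" unfolding V_def Good_def T_def using s'' by force
    qed
    finally show ?thesis using S(2) by simp
  qed
  show ?thesis using S opt unfolding Good_def T_def by blast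
qed

end
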